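(* Let $q$ be a prime power, let $l_1,\dots,l_t$ be distinct odd primes coprime to $q$, and let $r_1,\dots,r_t$ be positive integers. For each $i$ write $\mathrm{ord}_{l_i}(q)=2^{a_i}d_i$ with $a_i\ge 0$ an integer and $d_i\ge1$ odd. Then: (1) if there exists $j\in\{1,\dots,t\}$ with $a_j=0$ or $a_j\ge 2$, then $\left|\Omega_{q^2,\prod_{i=1}^{t}l_i^{r_i}}\right|=\left|\Omega_{q^2,\prod_{i\ne j}l_i^{r_i}}\right|$; (2) if $a_1=\dots=a_t=1$, then $\left|\Omega_{q^2,\prod_{i=1}^{t}l_i^{r_i}}\right|=\sum_{d\mid \prod_{i=1}^t l_i^{r_i}}\frac{\phi(d)}{\mathrm{ord}_d(q^2)}$; (3) if $a_i\ne 1$ for all $i\in\{1,\dots,t\}$, then $\left|\Omega_{q^2,\prod_{i=1}^{t}l_i^{r_i}}\right|=1$. Here an empty product is taken to be $1$.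
   Context: $\mathbb{F}_{q^2}$ is the finite field with $q^2$ elements. For $\alpha\in\mathbb{F}_{q^2}$ put $\bar\alpha=\alpha^q$, and for $f(x)=\sum_i f_ix^i$ put $\overline{f(x)}=\sum_i \bar f_i x^i$. For $f(x)$ with $f(0)\neq 0$, $f^*(x)=x^{\deg f}f(0)^{-1}f(1/x)$ and $f^\dagger(x)=\overline{f^*(x)}$. A polynomial is SCRIM if it is monic, irreducible over $\mathbb{F}_{q^2}$, has nonzero constant term, and satisfies $f=f^\dagger$. $\Omega_{q^2,n}$ denotes the set of SCRIM polynomials in $\mathbb{F}_{q^2}[x]$ dividing $x^n-1$. $\phi$ is Euler's totient function and $\mathrm{ord}_d(a)$ is the multiplicative order of $a$ modulo $d$. *)

theory Defs
  imports "HOL-Computational_Algebra.Computational_Algebra" "HOL-Number_Theory.Pocklington"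
begin

definition conj_poly :: "nat \<Rightarrow> 'a::field poly \<Rightarrow> 'a poly" where
  "conj_poly q f = map_poly (\<lambda>c. c ^ q) f"

definition recip_poly :: "'a::field poly \<Rightarrow> 'a poly" where
  "recip_poly f = Polynomial.smult (inverse (Polynomial.coeff f 0)) (reflect_poly f)"

definition dagger_poly :: "nat \<Rightarrow> 'a::field poly \<Rightarrow> 'a poly" where
  "dagger_poly q f = conj_poly q (recip_poly f)"

definition SCRIM :: "nat \<Rightarrow> 'a::field poly \<Rightarrow> bool" where
  "SCRIM q f \<longleftrightarrow> Polynomial.lead_coeff f = 1 \<and> irreducible f \<and> Polynomial.coeff f 0 \<noteq> 0 \<and> f = dagger_poly q f"

definition Omega :: "nat \<Rightarrow> nat \<Rightarrow> 'a::field poly set" where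
  "Omega q n = {f. SCRIM q f \<and> f dvd (Polynomial.monom 1 n - 1)}"

end

theory Submission
  imports Defs "HOL-Algebra.Algebraic_Closure_Type"
begin

hide_const (open) Divisibility.prime Divisibility.irreducible Polynomials.lead_coeff Polynomials.degree up_ring.coeff up_ring.monom module.smult

lemma sum_hom_gen:
  assumes add: "\<And>x y. h (x + y) = h x + h y" and z: "h 0 = 0"
  shows "h (sum g A) = sum (\<lambda>i. h (g i)) A"
  by (induct A rule: infinite_finite_induct) (auto simp: add z)

lemma map_poly_hom_mult:
  fixes h :: "'a::comm_ring_1 \<Rightarrow> 'b::comm_ring_1"
  assumes add: "\<And>x y. h (x + y) = h x + h y" and mult: "\<And>x y. h (x * y) = h x * h y"
    and z: "h 0 = 0"
  shows "map_poly h (a * b) = map_poly h a * map_poly h b"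
proof (rule poly_eqI)
  fix n
  show "coeff (map_poly h (a * b)) n = coeff (map_poly h a * map_poly h b) n"
    by (simp add: coeff_map_poly z coeff_mult sum_hom_gen[of h, OF add z] mult)
qed

lemma map_poly_hom_prod:
  fixes h :: "'a::comm_ring_1 \<Rightarrow> 'b::comm_ring_1"
  assumes add: "\<And>x y. h (x + y) = h x + h y" and mult: "\<And>x y. h (x * y) = h x * h y"
    and z: "h 0 = 0" and o: "h 1 = 1"
  shows "map_poly h (prod g A) = prod (\<lambda>i. map_poly h (g i)) A"
  by (induct A rule: infinite_finite_induct)
     (auto simp: map_poly_hom_mult[of h, OF add mult z] o)

lemma poly_map_poly_hom:
  fixes h :: "'a::comm_ring_1 \<Rightarrow> 'b::comm_ring_1"
  assumes add: "\<And>x y. h (x + y) = h x + h y" and mult: "\<And>x y. h (x * y) = h x * h y"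
    and z: "h 0 = 0"
  shows "poly (map_poly h p) (h x) = h (poly p x)"
  by (induct p rule: pCons_induct) (auto simp: map_poly_pCons z add mult)

lemma hom_uminus:
  fixes h :: "'a::comm_ring_1 \<Rightarrow> 'b::comm_ring_1"
  assumes add: "\<And>x y. h (x + y) = h x + h y"
  shows "h (- x) = - h x"
proof -
  have "h 0 = 0" using add[of 0 0] by simp
  moreover have "h (-x) + h x = h 0" using add[of "-x" x] by simp
  ultimately show ?thesis by (simp add: eq_neg_iff_add_eq_0)
qed

lemma map_poly_hom_linear:
  fixes h :: "'a::comm_ring_1 \<Rightarrow> 'b::comm_ring_1"
  assumes add: "\<And>x y. h (x + y) = h x + h y" and o: "h 1 = 1"
  shows "map_poly h [:-b, 1:] = [:- h b, 1:]"
proof -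
  have z: "h 0 = 0" using add[of 0 0] by simp
  show ?thesis by (simp add: map_poly_pCons z o hom_uminus[of h, OF add])
qed

lemma map_poly_hom_add:
  assumes add: "\<And>x y. h (x + y) = h x + h y" and z: "h 0 = 0"
  shows "map_poly h (a + b) = map_poly h a + map_poly h b"
  by (rule poly_eqI) (simp add: coeff_map_poly z add)

lemma map_poly_hom_diff:
  fixes h :: "'a::comm_ring_1 \<Rightarrow> 'b::comm_ring_1"
  assumes add: "\<And>x y. h (x + y) = h x + h y"
  shows "map_poly h (a - b) = map_poly h a - map_poly h b"
proof -
  have z: "h 0 = 0" using add[of 0 0] by simp
  have d: "h (x - y) = h x - h y" for x y
    using add[of "x - y" y] by (simp add: algebra_simps)
  show ?thesis by (rule poly_eqI) (simp add: coeff_map_poly z d)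
qed

lemma to_ac_poly_mult: "map_poly to_ac (a * b) = map_poly to_ac a * map_poly to_ac b"
  by (rule map_poly_hom_mult) auto

lemma to_ac_poly_add: "map_poly to_ac (a + b) = map_poly to_ac a + map_poly to_ac b"
  by (rule map_poly_hom_add) auto

lemma to_ac_poly_diff: "map_poly to_ac (a - b) = map_poly to_ac a - map_poly to_ac b"
  by (rule map_poly_hom_diff) auto

lemma to_ac_poly_prod: "map_poly to_ac (prod g A) = (\<Prod>i\<in>A. map_poly to_ac (g i))"
  by (rule map_poly_hom_prod) auto

lemma to_ac_poly_degree [simp]: "degree (map_poly to_ac p) = degree p"
  by (rule degree_map_poly) auto

lemma to_ac_poly_coeff [simp]: "coeff (map_poly to_ac p) i = to_ac (coeff p i)"
  by (simp add: coeff_map_poly)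

lemma to_ac_poly_eq_iff [simp]: "map_poly to_ac p = map_poly to_ac r \<longleftrightarrow> p = r"
proof
  assume "map_poly to_ac p = map_poly to_ac r"
  then have "coeff (map_poly to_ac p) i = coeff (map_poly to_ac r) i" for i
    by simp
  then show "p = r" by (intro poly_eqI) simp
qed simp

lemma to_ac_poly_const [simp]: "map_poly to_ac [:c:] = [:to_ac c:]"
  by (rule poly_eqI) (simp add: coeff_pCons split: nat.split)

lemma to_ac_xn: "map_poly to_ac (monom 1 n - 1) = monom 1 n - 1"
  by (simp add: to_ac_poly_diff map_poly_monom)

lemma poly_xn: "poly (monom 1 n - 1) (z::'a::comm_ring_1) = z ^ n - 1"
  by (simp add: poly_monom poly_diff)

lemma monic_dvd_eq:
  fixes f g :: "'a::field poly"
  assumes "f dvd g" "g \<noteq> 0" "degree g \<le> degree f"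
    "lead_coeff f = 1" "lead_coeff g = 1"
  shows "f = g"
proof -
  obtain r where r: "g = f * r" using assms(1) by blast
  have "f \<noteq> 0" "r \<noteq> 0" using r assms(2) by auto
  then have "degree g = degree f + degree r"
    unfolding r by (rule degree_mult_eq)
  then have "degree r = 0" using assms(3) by simp
  then obtain c where c: "r = [:c:]" by (metis degree_eq_zeroE)
  have "lead_coeff g = lead_coeff f * c"
    using r c by (simp add: lead_coeff_mult)
  then have "c = 1" using assms(4,5) by simp
  then show ?thesis using r c by simp
qed

lemma to_ac_root_mod:
  fixes a b :: "'a::field poly" and \<alpha> :: "'a alg_closure"
  assumes "poly (map_poly to_ac a) \<alpha> = 0" "poly (map_poly to_ac b) \<alpha> = 0"
  shows "poly (map_poly to_ac (a mod b)) \<alpha> = 0"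
proof -
  have "a mod b = a - (a div b) * b" by (simp add: minus_div_mult_eq_mod)
  then show ?thesis using assms by (simp add: to_ac_poly_diff to_ac_poly_mult)
qed

lemma shared_root:
  fixes f g :: "'a::field poly" and \<alpha> :: "'a alg_closure"
  assumes f: "irreducible f" and rf: "poly (map_poly to_ac f) \<alpha> = 0"
    and rg: "poly (map_poly to_ac g) \<alpha> = 0"
  shows "f dvd g"
proof -
  define P where "P = (\<lambda>d. \<exists>h. h \<noteq> 0 \<and> poly (map_poly to_ac h) \<alpha> = 0 \<and> degree h = d)"
  have f0: "f \<noteq> 0" using f by (simp add: Factorial_Ring.irreducible_def)
  have "P (degree f)" unfolding P_def using f0 rf by blast
  define m where "m = (LEAST d. P d)"
  have "P m" unfolding m_def by (rule LeastI) fact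
  then obtain hm where hm: "hm \<noteq> 0" "poly (map_poly to_ac hm) \<alpha> = 0" "degree hm = m"
    unfolding P_def by blast
  have minl: "\<And>h. h \<noteq> 0 \<Longrightarrow> poly (map_poly to_ac h) \<alpha> = 0 \<Longrightarrow> m \<le> degree h"
    unfolding m_def by (rule Least_le) (auto simp: P_def)
  have "f mod hm = 0"
  proof (rule ccontr)
    assume nz: "f mod hm \<noteq> 0"
    have "degree (f mod hm) < degree hm" by (rule degree_mod_less'[OF hm(1) nz])
    moreover have "m \<le> degree (f mod hm)" by (rule minl[OF nz to_ac_root_mod[OF rf hm(2)]])
    ultimately show False using hm(3) by simp
  qed
  then obtain c where c: "f = hm * c" by (metis dvd_def mod_0_imp_dvd)
  have "is_unit hm \<or> is_unit c" using Factorial_Ring.irreducibleD[OF f c] .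
  moreover have "\<not> is_unit hm"
  proof
    assume "is_unit hm"
    then obtain c0 where "hm = [:c0:]" "c0 dvd 1" using is_unit_poly_iff by blast
    then show False using hm(1,2) by simp
  qed
  ultimately have "is_unit c" by blast
  then obtain c1 where c1': "c = [:c1:]" "c1 dvd 1" using is_unit_poly_iff by blast
  then have c1: "c = [:c1:]" "c1 \<noteq> 0" by auto
  have degf: "degree f = m" using c c1 hm(3) by simp
  show "f dvd g"
  proof (rule ccontr)
    assume nd: "\<not> f dvd g"
    then have nz: "g mod f \<noteq> 0" by (simp add: dvd_eq_mod_eq_0)
    have "degree (g mod f) < degree f" by (rule degree_mod_less'[OF f0 nz])
    moreover have "m \<le> degree (g mod f)" by (rule minl[OF nz to_ac_root_mod[OF rg rf]])
    ultimately show False using degf by simp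
  qed
qed


context
  fixes q p k :: nat
  assumes cardF: "card (UNIV :: 'F::{finite,field} set) = q ^ 2"
    and p_prime: "prime p" and k_pos: "k > 0" and q_eq: "q = p ^ k"
begin

lemma charF: "CHAR('F) = p"
proof -
  have fin: "finite (UNIV :: 'F set)" by simp
  have "CHAR('F) > 0" using finite_imp_CHAR_pos[OF fin] .
  then have pc: "prime CHAR('F)" using prime_CHAR_semidom by blast
  have "card (UNIV :: 'F set) = p ^ (k * 2)" using cardF q_eq by (simp add: power_mult)
  then have "CHAR('F) dvd p ^ (k * 2)" using CHAR_dvd_CARD[where 'a='F] by simp
  then have "CHAR('F) dvd p" using pc prime_dvd_power by blast
  then show ?thesis using pc p_prime primes_dvd_imp_eq by blast
qed

lemma charK: "CHAR('F alg_closure) = p"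
  by (simp add: charF)

lemma q_ge2: "q \<ge> 2"
proof -
  have "p \<ge> 2" using p_prime prime_ge_2_nat by blast
  moreover have "p ^ 1 \<le> p ^ k" using k_pos prime_gt_0_nat[OF p_prime] by (intro power_increasing) auto
  ultimately show ?thesis using q_eq by simp
qed

lemma frobK_pj: "((x::'F alg_closure) + y) ^ (p ^ j) = x ^ (p ^ j) + y ^ (p ^ j)"
  by (rule freshmans_dream'[where n=j]) (simp_all add: charF p_prime)

lemma frobK_q: "((x::'F alg_closure) + y) ^ q = x ^ q + y ^ q"
  unfolding q_eq by (rule frobK_pj)

lemma frobK_Q: "((x::'F alg_closure) + y) ^ (q ^ 2) = x ^ (q ^ 2) + y ^ (q ^ 2)"
proof -
  have "q ^ 2 = p ^ (k * 2)" using q_eq by (simp add: power_mult)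
  then show ?thesis by (simp only: frobK_pj)
qed

lemma frobF_q: "((x::'F) + y) ^ q = x ^ q + y ^ q"
proof -
  have "to_ac ((x + y) ^ q) = to_ac (x ^ q + y ^ q)" by (simp add: frobK_q)
  then show ?thesis by (simp only: to_ac_eq_iff)
qed

lemma F_pow_card: "(x::'F) ^ (q ^ 2) = x"
proof (cases "x = 0")
  case False
  have "x * (\<Prod>y\<in>UNIV-{0}. x * y) = x * x ^ (card (UNIV :: 'F set) - 1) * \<Prod>(UNIV-{0::'F})"
    by (simp add: prod.distrib mult_ac)
  also have "x * x ^ (card (UNIV :: 'F set) - 1) = x ^ Suc (card (UNIV :: 'F set) - 1)"
    by (subst power_Suc) auto
  also have "Suc (card (UNIV :: 'F set) - 1) = card (UNIV :: 'F set)"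
    using finite_UNIV_card_ge_0[where ?'a = 'F] by simp
  also have "(\<Prod>y\<in>UNIV-{0}. x * y) = (\<Prod>y\<in>UNIV-{0}. y)"
    by (rule prod.reindex_bij_witness[of _ "\<lambda>y. y / x" "\<lambda>y. x * y"]) (use False in auto)
  finally show ?thesis
    by (simp add: cardF)
qed (use q_ge2 in auto)

lemma toac_fix: "(to_ac (c::'F)) ^ (q ^ 2) = to_ac c"
  by (metis to_ac_power F_pow_card)

lemma range_toac: "(z::'F alg_closure) ^ (q ^ 2) = z \<longleftrightarrow> z \<in> range to_ac"
proof
  assume "z \<in> range to_ac" then show "z ^ (q ^ 2) = z" using toac_fix by auto
next
  assume zz: "z ^ (q ^ 2) = z"
  define P :: "'F alg_closure poly" where "P = monom 1 (q ^ 2) - [:0, 1:]"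
  have Q4: "2 ^ 2 \<le> q ^ 2" using q_ge2 by (rule power_mono) simp
  then have Q1: "q ^ 2 \<noteq> 1" by auto
  have "coeff P (q ^ 2) = 1" using Q1 by (simp add: P_def coeff_monom coeff_pCons split: nat.split)
  then have P0: "P \<noteq> 0" by auto
  have degP: "degree P \<le> q ^ 2" unfolding P_def
    using Q4 by (intro order.trans[OF degree_diff_le_max]) (auto simp: degree_monom_le)
  have roots: "{x. poly P x = 0} = {x. x ^ (q ^ 2) = x}" by (simp add: P_def poly_monom)
  have fin: "finite {x::'F alg_closure. x ^ (q ^ 2) = x}" using poly_roots_finite[OF P0] roots by simp
  have cardle: "card {x::'F alg_closure. x ^ (q ^ 2) = x} \<le> q ^ 2"
    using card_poly_roots_bound[OF P0] degP roots by simp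
  have sub: "range to_ac \<subseteq> {x::'F alg_closure. x ^ (q ^ 2) = x}" using toac_fix by auto
  have "card (range (to_ac :: 'F \<Rightarrow> 'F alg_closure)) = q ^ 2"
    using card_image[OF inj_to_ac[where 'a='F]] cardF by simp
  then have "range to_ac = {x::'F alg_closure. x ^ (q ^ 2) = x}"
    using card_subset_eq[OF fin sub] cardle by (metis card_mono fin le_antisym sub)
  then show "z \<in> range to_ac" using zz by auto
qed

lemma poly_frob_Q:
  "poly (map_poly to_ac (f::'F poly)) (z ^ (q ^ 2)) = (poly (map_poly to_ac f) z) ^ (q ^ 2)"
proof -
  have h0: "(0::'F alg_closure) ^ (q ^ 2) = 0" using q_ge2 by simp
  have "map_poly (\<lambda>x. x ^ (q ^ 2)) (map_poly to_ac f) = map_poly to_ac f"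
    by (rule poly_eqI) (simp add: coeff_map_poly h0 toac_fix)
  then have "poly (map_poly to_ac f) (z ^ (q ^ 2)) = poly (map_poly (\<lambda>x. x ^ (q ^ 2)) (map_poly to_ac f)) (z ^ (q ^ 2))"
    by simp
  also have "\<dots> = (poly (map_poly to_ac f) z) ^ (q ^ 2)"
    by (rule poly_map_poly_hom[where h="\<lambda>x. x ^ (q ^ 2)"]) (auto simp: frobK_Q power_mult_distrib h0)
  finally show ?thesis .
qed

lemma poly_frob_Q_pow:
  "poly (map_poly to_ac (f::'F poly)) (z ^ ((q ^ 2) ^ i)) = (poly (map_poly to_ac f) z) ^ ((q ^ 2) ^ i)"
proof (induct i)
  case (Suc i)
  have "z ^ ((q ^ 2) ^ Suc i) = (z ^ ((q ^ 2) ^ i)) ^ (q ^ 2)" by (simp only: power_Suc2 power_mult)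
  moreover have "(poly (map_poly to_ac f) z) ^ ((q ^ 2) ^ Suc i) = ((poly (map_poly to_ac f) z) ^ ((q ^ 2) ^ i)) ^ (q ^ 2)"
    by (simp only: power_Suc2 power_mult)
  ultimately show ?case using Suc poly_frob_Q by simp
qed simp

end

context
  fixes q p k :: nat
  assumes cardF: "card (UNIV :: 'F::{finite,field} set) = q ^ 2"
    and p_prime: "prime p" and k_pos: "k > 0" and q_eq: "q = p ^ k"
begin

lemma pow_shift: "(\<alpha>::'a::comm_monoid_mult) ^ ((Q::nat) ^ (i + j)) = (\<alpha> ^ (Q ^ i)) ^ (Q ^ j)"
  by (simp add: power_add power_mult)

lemma core:
  fixes f :: "'F poly" and \<alpha> :: "'F alg_closure"
  assumes irr: "irreducible f" and mon: "lead_coeff f = 1" and rt: "poly (map_poly to_ac f) \<alpha> = 0"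
    and per: "\<alpha> ^ ((q^2)^m) = \<alpha>" "m > 0"
  defines "m0 \<equiv> LEAST m. m > 0 \<and> \<alpha> ^ ((q^2)^m) = \<alpha>"
  shows "map_poly to_ac f = (\<Prod>i<m0. [:- (\<alpha> ^ ((q^2)^i)), 1:])"
    and "inj_on (\<lambda>i. \<alpha> ^ ((q^2)^i)) {..<m0}" and "m0 > 0" and "\<alpha> ^ ((q^2)^m0) = \<alpha>"
    and "\<And>d. 0 < d \<Longrightarrow> d < m0 \<Longrightarrow> \<alpha> ^ ((q^2)^d) \<noteq> \<alpha>"
proof -
  define Q where "Q = q ^ 2"
  define \<beta> where "\<beta> = (\<lambda>i. \<alpha> ^ (Q ^ i))"
  have Qpos: "Q > 0" using q_ge2[OF cardF p_prime k_pos q_eq] by (simp add: Q_def)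
  have m0P: "m0 > 0 \<and> \<alpha> ^ (Q ^ m0) = \<alpha>"
    unfolding m0_def Q_def by (rule LeastI[of _ m]) (use per in auto)
  have m0min: "\<And>d. 0 < d \<Longrightarrow> d < m0 \<Longrightarrow> \<alpha> ^ (Q ^ d) \<noteq> \<alpha>"
    unfolding m0_def Q_def using not_less_Least by blast
  show "m0 > 0" "\<alpha> ^ ((q^2)^m0) = \<alpha>" using m0P by (auto simp: Q_def)
  show "\<And>d. 0 < d \<Longrightarrow> d < m0 \<Longrightarrow> \<alpha> ^ ((q^2)^d) \<noteq> \<alpha>" using m0min by (auto simp: Q_def)
  have shift: "\<beta> (i + j) = (\<beta> i) ^ (Q ^ j)" for i j unfolding \<beta>_def by (rule pow_shift)
  have per0: "\<beta> m0 = \<beta> 0" using m0P by (simp add: \<beta>_def)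
  have inj: "inj_on \<beta> {..<m0}"
  proof -
    have *: "\<beta> i \<noteq> \<beta> j" if ij: "i < j" "j < m0" for i j
    proof
      assume eq: "\<beta> i = \<beta> j"
      have "\<beta> (i + (m0 - j)) = \<beta> (j + (m0 - j))" using shift eq by simp
      also have "j + (m0 - j) = m0" using ij by simp
      finally have fa: "\<alpha> ^ (Q ^ (i + (m0 - j))) = \<alpha>" using m0P by (simp add: \<beta>_def)
      have d1: "0 < i + (m0 - j)" and d2: "i + (m0 - j) < m0" using ij by auto
      show False using m0min[OF d1 d2] fa by simp
    qed
    show ?thesis unfolding inj_on_def
      by (metis * lessThan_iff linorder_neqE_nat)
  qed
  then show "inj_on (\<lambda>i. \<alpha> ^ ((q^2)^i)) {..<m0}" by (simp add: \<beta>_def Q_def)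
  define h where "h = (\<Prod>i<m0. [:- \<beta> i, 1:])"
  have Fr0: "(0::'F alg_closure) ^ Q = 0" using Qpos by simp
  have Fradd: "(x + y) ^ Q = x ^ Q + y ^ Q" for x y :: "'F alg_closure"
    unfolding Q_def by (rule frobK_Q[OF cardF p_prime k_pos q_eq])
  have "map_poly (\<lambda>x. x ^ Q) h = (\<Prod>i<m0. map_poly (\<lambda>x. x ^ Q) [:- \<beta> i, 1:])"
    unfolding h_def by (rule map_poly_hom_prod) (auto simp: Fradd power_mult_distrib Fr0)
  also have "\<dots> = (\<Prod>i<m0. [:- \<beta> (Suc i), 1:])"
  proof (rule prod.cong[OF refl])
    fix i
    have "\<beta> (Suc i) = (\<beta> i) ^ Q" using shift[of i 1] by simp
    then show "map_poly (\<lambda>x. x ^ Q) [:- \<beta> i, 1:] = [:- \<beta> (Suc i), 1:]"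
      by (simp add: map_poly_hom_linear[where h="\<lambda>x. x ^ Q", OF Fradd])
  qed
  also have "\<dots> = h"
  proof -
    let ?g = "\<lambda>i. [:- \<beta> i, 1:]"
    have "?g 0 * (\<Prod>i<m0. ?g (Suc i)) = (\<Prod>i<Suc m0. ?g i)" by (rule prod.lessThan_Suc_shift[symmetric])
    also have "\<dots> = (\<Prod>i<m0. ?g i) * ?g m0" by simp
    also have "\<dots> = ?g 0 * (\<Prod>i<m0. ?g i)" using per0 by (simp add: mult.commute)
    finally have eq: "?g 0 * (\<Prod>i<m0. ?g (Suc i)) = ?g 0 * (\<Prod>i<m0. ?g i)" .
    have nz: "?g 0 \<noteq> 0" by simp
    show ?thesis unfolding h_def using eq by (simp only: mult_left_cancel[OF nz])
  qed
  finally have hfix: "map_poly (\<lambda>x. x ^ Q) h = h" .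
  have crange: "coeff h n \<in> range to_ac" for n
  proof -
    have "coeff (map_poly (\<lambda>x. x ^ Q) h) n = coeff h n ^ Q" by (simp add: coeff_map_poly Fr0)
    then have "coeff h n ^ (q ^ 2) = coeff h n" using hfix by (simp add: Q_def)
    then show ?thesis using range_toac[OF cardF p_prime k_pos q_eq] by blast
  qed
  define h0 where "h0 = map_poly of_ac h"
  have h0h: "map_poly to_ac h0 = h"
    by (rule poly_eqI) (simp add: h0_def coeff_map_poly to_ac_of_ac[OF crange])
  have lin0: "[:- \<beta> i, 1:] \<noteq> 0" for i by simp
  have degh: "degree h = m0"
    unfolding h_def by (subst degree_prod_sum_eq) auto
  have leadh: "lead_coeff h = 1" unfolding h_def by (simp add: lead_coeff_prod)
  have h00: "h0 \<noteq> 0" using h0h leadh by auto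
  have leadh0: "lead_coeff h0 = 1"
  proof -
    have "to_ac (lead_coeff h0) = lead_coeff h" using h0h[symmetric] by simp
    then show ?thesis using leadh by (metis to_ac_1 to_ac_eq_iff)
  qed
  have degh0: "degree h0 = m0" using h0h degh by (metis to_ac_poly_degree)
  have "poly h \<alpha> = 0"
  proof -
    have "poly h \<alpha> = (\<Prod>i<m0. poly [:- \<beta> i, 1:] \<alpha>)" unfolding h_def by (rule poly_prod)
    moreover have "poly [:- \<beta> 0, 1:] \<alpha> = 0" by (simp add: \<beta>_def)
    ultimately show ?thesis using m0P by (metis finite_lessThan lessThan_iff prod_zero_iff)
  qed
  then have fdvd: "f dvd h0" using shared_root[OF irr rt] h0h by simp
  have roots: "\<beta> ` {..<m0} \<subseteq> {x. poly (map_poly to_ac f) x = 0}"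
  proof
    fix x assume "x \<in> \<beta> ` {..<m0}"
    then obtain i where "x = \<beta> i" by blast
    then have "poly (map_poly to_ac f) x = (poly (map_poly to_ac f) \<alpha>) ^ ((q^2)^i)"
      using poly_frob_Q_pow[OF cardF p_prime k_pos q_eq] by (simp add: \<beta>_def Q_def)
    then show "x \<in> {x. poly (map_poly to_ac f) x = 0}" using rt Qpos by (simp add: Q_def)
  qed
  have f0: "map_poly to_ac f \<noteq> 0" using irr by (metis map_poly_0 not_irreducible_zero to_ac_poly_eq_iff)
  have "m0 = card (\<beta> ` {..<m0})" using card_image[OF inj] by simp
  also have "\<dots> \<le> card {x. poly (map_poly to_ac f) x = 0}"
    by (rule card_mono[OF poly_roots_finite[OF f0] roots])
  also have "\<dots> \<le> degree f" using card_poly_roots_bound[OF f0] by simp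
  finally have "degree h0 \<le> degree f" using degh0 by simp
  then have "f = h0" using monic_dvd_eq[OF fdvd h00 _ mon leadh0] by simp
  then show "map_poly to_ac f = (\<Prod>i<m0. [:- (\<alpha> ^ ((q^2)^i)), 1:])"
    using h0h by (simp add: h_def \<beta>_def Q_def)
qed

end

lemma pow_gcd_one:
  fixes z :: "'a::comm_monoid_mult"
  assumes "z ^ a = 1" "z ^ b = 1" "a \<noteq> 0"
  shows "z ^ gcd a b = 1"
proof -
  obtain x y where xy: "a * x = b * y + gcd a b" using bezout_nat[OF assms(3)] by blast
  have "1 = z ^ (a * x)" using assms(1) by (simp add: power_mult)
  also have "\<dots> = (z ^ b) ^ y * z ^ gcd a b" by (simp add: xy power_add power_mult)
  finally show ?thesis using assms(2) by simp
qed

lemma per_exists: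
  fixes z :: "'a::comm_monoid_mult"
  assumes "z ^ n = 1" "n > 0" "coprime n Q" "Q > 0"
  shows "\<exists>m>0. z ^ (Q ^ m) = z"
proof -
  have cp: "coprime n Q" by fact
  have o: "ord n Q > 0" using cp by (simp add: ord_eq_0[symmetric] coprime_commute)
  have "[Q ^ ord n Q = 1] (mod n)" by (rule ord)
  then have "n dvd Q ^ ord n Q - 1" by (rule cong_to_1_nat)
  then obtain t where t: "Q ^ ord n Q - 1 = n * t" by blast
  have "Q ^ ord n Q \<noteq> 0" using assms(4) by simp
  then have "Q ^ ord n Q = 1 + n * t" using t by linarith
  then have "z ^ (Q ^ ord n Q) = z" using assms(1) by (simp add: power_add power_mult)
  then show ?thesis using o by blast
qed

context
  fixes q p k :: nat
  assumes cardF: "card (UNIV :: 'F::{finite,field} set) = q ^ 2"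
    and p_prime: "prime p" and k_pos: "k > 0" and q_eq: "q = p ^ k"
begin

lemma qpos: "q > 0" using q_ge2[OF cardF p_prime k_pos q_eq] by simp

lemma toac_conj: "map_poly to_ac (conj_poly q (g::'F poly)) = map_poly (\<lambda>x. x ^ q) (map_poly to_ac g)"
proof -
  have "map_poly to_ac (conj_poly q g) = map_poly (to_ac \<circ> (\<lambda>c. c ^ q)) g"
    unfolding conj_poly_def using qpos by (subst map_poly_map_poly) auto
  also have "\<dots> = map_poly ((\<lambda>x. x ^ q) \<circ> to_ac) g" by (simp add: comp_def)
  also have "\<dots> = map_poly (\<lambda>x. x ^ q) (map_poly to_ac g)"
    using qpos by (subst map_poly_map_poly) auto
  finally show ?thesis .
qed

lemma toac_reflect: "map_poly to_ac (reflect_poly (g::'F poly)) = reflect_poly (map_poly to_ac g)"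
  by (rule poly_eqI) (simp add: coeff_reflect_poly)

lemma toac_recip: "map_poly to_ac (recip_poly (g::'F poly)) = smult (inverse (to_ac (coeff g 0))) (reflect_poly (map_poly to_ac g))"
proof -
  have "map_poly to_ac (recip_poly g) = map_poly to_ac (smult (inverse (coeff g 0)) (reflect_poly g))"
    by (simp add: recip_poly_def)
  also have "\<dots> = smult (to_ac (inverse (coeff g 0))) (map_poly to_ac (reflect_poly g))"
    by (rule poly_eqI) simp
  finally show ?thesis by (simp add: toac_reflect)
qed

lemma dagger_root:
  fixes f :: "'F poly" and \<alpha> :: "'F alg_closure"
  assumes "\<alpha> \<noteq> 0" "poly (map_poly to_ac f) \<alpha> = 0"
  shows "poly (map_poly to_ac (dagger_poly q f)) ((inverse \<alpha>) ^ q) = 0"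
proof -
  have h0: "(0::'F alg_closure) ^ q = 0" using qpos by simp
  have "poly (map_poly to_ac (dagger_poly q f)) ((inverse \<alpha>) ^ q)
      = poly (map_poly (\<lambda>x. x ^ q) (map_poly to_ac (recip_poly f))) ((inverse \<alpha>) ^ q)"
    by (simp add: dagger_poly_def toac_conj)
  also have "\<dots> = (poly (map_poly to_ac (recip_poly f)) (inverse \<alpha>)) ^ q"
    by (rule poly_map_poly_hom[where h="\<lambda>x. x ^ q"])
       (auto simp: frobK_q[OF cardF p_prime k_pos q_eq] power_mult_distrib h0)
  also have "poly (map_poly to_ac (recip_poly f)) (inverse \<alpha>) = 0"
    using assms by (simp add: toac_recip poly_reflect_poly_nz)
  finally show ?thesis using h0 by simp
qed

lemma conj_coeff: "coeff (conj_poly q (g::'F poly)) i = (coeff g i) ^ q"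
  unfolding conj_poly_def using qpos by (simp add: coeff_map_poly)

lemma conj_degree: "degree (conj_poly q (g::'F poly)) = degree g"
  unfolding conj_poly_def by (rule degree_map_poly) simp

lemma dagger_monic:
  fixes f :: "'F poly"
  assumes "coeff f 0 \<noteq> 0"
  shows "lead_coeff (dagger_poly q f) = 1" "degree (dagger_poly q f) = degree f"
proof -
  have dr: "degree (recip_poly f) = degree f"
    using assms by (simp add: recip_poly_def)
  have "lead_coeff (recip_poly f) = inverse (coeff f 0) * coeff (reflect_poly f) (degree f)"
    using dr by (simp add: recip_poly_def)
  also have "coeff (reflect_poly f) (degree f) = coeff f 0" by (simp add: coeff_reflect_poly)
  finally have "lead_coeff (recip_poly f) = 1" using assms by simp
  then show "lead_coeff (dagger_poly q f) = 1"
    unfolding dagger_poly_def by (simp add: conj_coeff conj_degree)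
  show "degree (dagger_poly q f) = degree f"
    unfolding dagger_poly_def by (simp add: conj_degree dr)
qed

lemma irreducible_deg_pos: "irreducible (f::'a::field poly) \<Longrightarrow> degree f > 0"
  by (metis Factorial_Ring.irreducible_def gr0I is_unit_iff_degree)

lemma toac_root_exists:
  fixes f :: "'F poly"
  assumes "degree f > 0"
  obtains \<alpha> where "poly (map_poly to_ac f) \<alpha> = 0"
  using alg_closed_imp_poly_has_root[of "map_poly to_ac f"] assms by auto

lemma root_dvd:
  fixes f g :: "'F poly"
  assumes "f dvd g" "poly (map_poly to_ac f) \<alpha> = 0"
  shows "poly (map_poly to_ac g) \<alpha> = 0"
  using assms by (auto simp: to_ac_poly_mult)

lemma orbit_to_scrim:
  fixes f :: "'F poly" and \<alpha> :: "'F alg_closure"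
  assumes irr: "irreducible f" and mon: "lead_coeff f = 1" and c0: "coeff f 0 \<noteq> 0"
    and rt: "poly (map_poly to_ac f) \<alpha> = 0" and a0: "\<alpha> \<noteq> 0"
    and orb: "(inverse \<alpha>) ^ q = \<alpha> ^ ((q^2)^i)"
  shows "f = dagger_poly q f"
proof -
  have r1: "poly (map_poly to_ac (dagger_poly q f)) ((inverse \<alpha>) ^ q) = 0"
    by (rule dagger_root[OF a0 rt])
  have r2: "poly (map_poly to_ac f) ((inverse \<alpha>) ^ q) = 0"
    using poly_frob_Q_pow[OF cardF p_prime k_pos q_eq, of f \<alpha> i] rt qpos orb by simp
  have dv: "f dvd dagger_poly q f" by (rule shared_root[OF irr r2 r1])
  have dm: "lead_coeff (dagger_poly q f) = 1" "degree (dagger_poly q f) = degree f"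
    using dagger_monic[OF c0] by auto
  have nz: "dagger_poly q f \<noteq> 0" using dm by auto
  show ?thesis by (rule monic_dvd_eq[OF dv nz _ mon dm(1)]) (simp add: dm)
qed

lemma scrim_to_orbit:
  fixes f :: "'F poly" and \<alpha> :: "'F alg_closure"
  assumes sc: "SCRIM q f" and rt: "poly (map_poly to_ac f) \<alpha> = 0" and a0: "\<alpha> \<noteq> 0"
    and per: "\<alpha> ^ ((q^2)^m) = \<alpha>" "m > 0"
  shows "\<exists>i>0. (inverse \<alpha>) ^ q = \<alpha> ^ ((q^2)^i)"
proof -
  have irr: "irreducible f" and mon: "lead_coeff f = 1" and fd: "f = dagger_poly q f"
    using sc by (auto simp: SCRIM_def)
  define m0 where "m0 = (LEAST m. m > 0 \<and> \<alpha> ^ ((q^2)^m) = \<alpha>)"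
  note cr = core[OF cardF p_prime k_pos q_eq irr mon rt per, folded m0_def]
  have "poly (map_poly to_ac f) ((inverse \<alpha>) ^ q) = 0"
    using dagger_root[OF a0 rt] fd by simp
  then have "poly (\<Prod>i<m0. [:- (\<alpha> ^ ((q^2)^i)), 1:]) ((inverse \<alpha>) ^ q) = 0"
    using cr(1) by simp
  then obtain i where i: "i < m0" "(inverse \<alpha>) ^ q = \<alpha> ^ ((q^2)^i)"
    by (auto simp: poly_prod prod_zero_iff)
  have "\<alpha> ^ ((q^2)^(m0 + i)) = (\<alpha> ^ ((q^2)^m0)) ^ ((q^2)^i)" by (rule pow_shift[OF cardF p_prime k_pos q_eq])
  also have "\<dots> = \<alpha> ^ ((q^2)^i)" using cr(4) by simp
  finally have "(inverse \<alpha>) ^ q = \<alpha> ^ ((q^2)^(m0 + i))" using i by simp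
  moreover have "m0 + i > 0" using cr(3) by simp
  ultimately show ?thesis by blast
qed

lemma omega_gcd:
  fixes f :: "'F poly"
  assumes om: "f \<in> Omega q n" and n0: "n > 0" and cp: "coprime n q"
  shows "\<exists>j. odd j \<and> f dvd (monom 1 (gcd n (q ^ j + 1)) - 1)"
proof -
  have sc: "SCRIM q f" and dv: "f dvd monom 1 n - 1" using om by (auto simp: Omega_def)
  have irr: "irreducible f" using sc by (simp add: SCRIM_def)
  obtain \<alpha> where rt: "poly (map_poly to_ac f) \<alpha> = 0"
    using toac_root_exists[OF irreducible_deg_pos[OF irr]] by blast
  have "poly (map_poly to_ac (monom 1 n - 1)) \<alpha> = 0" by (rule root_dvd[OF dv rt])
  then have an: "\<alpha> ^ n = 1" by (simp add: to_ac_xn poly_xn poly_monom)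
  then have a0: "\<alpha> \<noteq> 0" using n0 by (metis power_0_left zero_neq_one gr_implies_not0)
  have cpQ: "coprime n (q^2)" using cp by simp
  obtain m where per: "m > 0" "\<alpha> ^ ((q^2)^m) = \<alpha>" using per_exists[OF an n0 cpQ] qpos by auto
  obtain i where i: "i > 0" "(inverse \<alpha>) ^ q = \<alpha> ^ ((q^2)^i)"
    using scrim_to_orbit[OF sc rt a0 per(2) per(1)] by blast
  define j where "j = 2 * i - 1"
  have oj: "odd j" using i(1) by (simp add: j_def)
  have qi: "(q^2)^i = q * q ^ j" using i(1) by (simp add: j_def power_mult[symmetric] power_Suc[symmetric])
  have "\<alpha> ^ ((q^2)^i) * \<alpha> ^ q = 1" using i(2) a0 by (simp add: power_inverse[symmetric] field_simps)
  then have "\<alpha> ^ (q * (q ^ j + 1)) = 1" by (simp add: qi algebra_simps power_add)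
  then have "\<alpha> ^ gcd n (q * (q ^ j + 1)) = 1" using pow_gcd_one[OF an] n0 by simp
  moreover have "gcd n (q * (q ^ j + 1)) = gcd n (q ^ j + 1)"
    using cp by (rule gcd_mult_right_left_cancel)
  ultimately have "\<alpha> ^ gcd n (q ^ j + 1) = 1" by simp
  then have "poly (map_poly to_ac (monom 1 (gcd n (q ^ j + 1)) - 1)) \<alpha> = 0"
    by (simp add: to_ac_xn poly_xn poly_monom)
  then have "f dvd monom 1 (gcd n (q ^ j + 1)) - 1" by (rule shared_root[OF irr rt])
  then show ?thesis using oj by blast
qed

lemma all_scrim:
  fixes f :: "'F poly"
  assumes irr: "irreducible f" and mon: "lead_coeff f = 1" and dv: "f dvd monom 1 n - 1"
    and n0: "n > 0" and nd: "n dvd q ^ j + 1" and oj: "odd j"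
  shows "SCRIM q f"
proof -
  have c0: "coeff f 0 \<noteq> 0"
  proof
    assume "coeff f 0 = 0"
    then have "poly f 0 = 0" by (simp add: poly_0_coeff_0)
    then have "poly (monom 1 n - 1) (0::'F) = 0" using dv by (metis dvdE mult_zero_left poly_mult)
    then show False using n0 by (simp add: poly_xn poly_monom power_0_left)
  qed
  obtain \<alpha> where rt: "poly (map_poly to_ac f) \<alpha> = 0"
    using toac_root_exists[OF irreducible_deg_pos[OF irr]] by blast
  have "poly (map_poly to_ac (monom 1 n - 1)) \<alpha> = 0" by (rule root_dvd[OF dv rt])
  then have an: "\<alpha> ^ n = 1" by (simp add: to_ac_xn poly_xn poly_monom)
  then have a0: "\<alpha> \<noteq> 0" using n0 by (metis power_0_left zero_neq_one gr_implies_not0)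
  obtain t where t: "q ^ j + 1 = n * t" using nd by blast
  have aj: "\<alpha> ^ (q ^ j + 1) = 1"
  proof -
    have "\<alpha> ^ (q ^ j + 1) = (\<alpha> ^ n) ^ t" by (simp only: t power_mult)
    then show ?thesis using an by simp
  qed
  obtain i' where j: "j = 2 * i' + 1" using oj oddE by blast
  define i where "i = Suc i'"
  have "(q^2)^i = q ^ (2 * Suc i')" unfolding i_def by (rule power_mult[symmetric])
  also have "2 * Suc i' = Suc j" using j by simp
  finally have qi: "(q^2)^i = q * q ^ j" by simp
  have "\<alpha> ^ ((q^2)^i) * \<alpha> ^ q = \<alpha> ^ (q * (q ^ j + 1))" by (simp add: qi algebra_simps power_add)
  also have "\<dots> = (\<alpha> ^ (q ^ j + 1)) ^ q" by (simp only: mult.commute[of q] power_mult)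
  also have "\<dots> = 1" using aj by simp
  finally have "\<alpha> ^ ((q^2)^i) = inverse (\<alpha> ^ q)" using a0 by (simp add: field_simps)
  then have orb: "(inverse \<alpha>) ^ q = \<alpha> ^ ((q^2)^i)" by (simp add: power_inverse)
  have "f = dagger_poly q f" by (rule orbit_to_scrim[OF irr mon c0 rt a0 orb])
  then show ?thesis using irr mon c0 by (simp add: SCRIM_def)
qed

end

definition Bset :: "nat \<Rightarrow> 'a::field set" where
  "Bset e = {z. z ^ e = 1 \<and> (\<forall>m. 0 < m \<and> m < e \<longrightarrow> z ^ m \<noteq> 1)}"

lemma Bset_dvd:
  assumes z: "z \<in> Bset e" and e0: "e > 0" and zm: "z ^ m = 1"
  shows "e dvd m"
proof (rule ccontr)
  assume nd: "\<not> e dvd m"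
  then have "m mod e \<noteq> 0" by (simp add: dvd_eq_mod_eq_0)
  then have r0: "m mod e > 0" by simp
  have re: "m mod e < e" using e0 by simp
  have ze: "z ^ e = 1" using z by (simp add: Bset_def)
  have "z ^ m = z ^ (e * (m div e) + m mod e)" by simp
  also have "\<dots> = (z ^ e) ^ (m div e) * z ^ (m mod e)" by (simp only: power_add power_mult)
  finally have "z ^ m = (z ^ e) ^ (m div e) * z ^ (m mod e)" .
  then have "z ^ (m mod e) = 1" using zm ze by simp
  then show False using z r0 re by (auto simp: Bset_def)
qed

lemma Bset_iff:
  assumes z: "z \<in> Bset e" and e0: "e > 0"
  shows "z ^ m = 1 \<longleftrightarrow> e dvd m"
proof
  assume "z ^ m = 1" then show "e dvd m" by (rule Bset_dvd[OF z e0])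
next
  assume "e dvd m"
  then obtain t where "m = e * t" by blast
  then show "z ^ m = 1" using z by (simp add: Bset_def power_mult)
qed

lemma Bset_exists:
  fixes z :: "'a::field"
  assumes "z ^ d = 1" "d > 0"
  shows "\<exists>e. e dvd d \<and> e > 0 \<and> z \<in> Bset e"
proof -
  define e where "e = (LEAST m. m > 0 \<and> z ^ m = 1)"
  have e: "e > 0 \<and> z ^ e = 1" unfolding e_def by (rule LeastI[of _ d]) (use assms in auto)
  have "\<forall>m. 0 < m \<and> m < e \<longrightarrow> z ^ m \<noteq> 1" unfolding e_def using not_less_Least by blast
  then have zb: "z \<in> Bset e" using e by (simp add: Bset_def)
  then have "e dvd d" using Bset_dvd e assms by blast
  then show ?thesis using zb e by blast
qed

lemma Bset_disj:
  assumes "e > 0" "e' > 0" "e \<noteq> e'"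
  shows "Bset e \<inter> (Bset e' :: 'a::field set) = {}"
proof (rule ccontr)
  assume "Bset e \<inter> (Bset e' :: 'a set) \<noteq> {}"
  then obtain z :: 'a where z: "z \<in> Bset e" "z \<in> Bset e'" by blast
  have "e dvd e'" using Bset_dvd[OF z(1) assms(1)] z(2) by (simp add: Bset_def)
  moreover have "e' dvd e" using Bset_dvd[OF z(2) assms(2)] z(1) by (simp add: Bset_def)
  ultimately show False using assms(3) by (simp add: dvd_antisym)
qed

lemma finite_unity:
  assumes "d > 0"
  shows "finite {z::'a::field. z ^ d = 1}"
proof -
  have "coeff (monom 1 d - 1 :: 'a poly) d = 1" using assms by simp
  then have "(monom 1 d - 1 :: 'a poly) \<noteq> 0" by (metis coeff_0 zero_neq_one)
  from poly_roots_finite[OF this] show ?thesis by (simp add: poly_xn poly_monom)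
qed

lemma finite_Bset: "e > 0 \<Longrightarrow> finite (Bset e :: 'a::field set)"
  by (rule finite_subset[OF _ finite_unity[of e]]) (auto simp: Bset_def)

lemma unity_decomp:
  assumes "d > 0"
  shows "{z::'a::field. z ^ d = 1} = (\<Union>e\<in>{e. e dvd d}. Bset e)"
proof
  show "{z::'a. z ^ d = 1} \<subseteq> (\<Union>e\<in>{e. e dvd d}. Bset e)"
    using Bset_exists assms by blast
next
  show "(\<Union>e\<in>{e. e dvd d}. Bset e) \<subseteq> {z::'a. z ^ d = 1}"
  proof
    fix z :: 'a assume "z \<in> (\<Union>e\<in>{e. e dvd d}. Bset e)"
    then obtain e where e: "e dvd d" "z \<in> Bset e" by blast
    then obtain t where "d = e * t" by blast
    then show "z \<in> {z. z ^ d = 1}" using e by (simp add: Bset_def power_mult)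
  qed
qed

lemma card_unity_sum:
  assumes "d > 0"
  shows "card {z::'a::field. z ^ d = 1} = (\<Sum>e\<in>{e. e dvd d}. card (Bset e :: 'a set))"
proof -
  have pos: "e > 0" if "e \<in> {e. e dvd d}" for e using that assms dvd_pos_nat by blast
  show ?thesis unfolding unity_decomp[OF assms]
  proof (rule card_UN_disjoint)
    show "finite {e. e dvd d}" using assms by simp
    show "\<forall>i\<in>{e. e dvd d}. finite (Bset i :: 'a set)" using pos finite_Bset by blast
    show "\<forall>i\<in>{e. e dvd d}. \<forall>j\<in>{e. e dvd d}. i \<noteq> j \<longrightarrow> Bset i \<inter> (Bset j :: 'a set) = {}"
      using pos Bset_disj by blast
  qed
qed

lemma card_set_mset_le1: "(\<forall>x. count A x \<le> 1) \<Longrightarrow> card (set_mset A) = size A"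
proof (induct A)
  case (add x B)
  have "count B x = 0" using add.prems[rule_format, of x] by simp
  then have "x \<notin># B" by (simp add: not_in_iff)
  moreover have "\<forall>y. count B y \<le> 1"
  proof
    fix y
    have "count B y \<le> count (add_mset x B) y" by simp
    then show "count B y \<le> 1" using add.prems by (meson order_trans)
  qed
  ultimately show ?case using add.hyps by simp
qed simp

lemma rsquarefree_card_roots:
  fixes P :: "'a::alg_closed_field poly"
  assumes P0: "P \<noteq> 0" and sq: "\<forall>a. \<not> (poly P a = 0 \<and> poly (pderiv P) a = 0)"
  shows "card {z. poly P z = 0} = degree P"
proof -
  obtain A where A: "size A = degree P" "P = smult (lead_coeff P) (\<Prod>x\<in>#A. [:-x, 1:])"
    using alg_closed_imp_factorization[OF P0] by blast
  have lc: "lead_coeff P \<noteq> 0" using P0 by simp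
  have roots: "{z. poly P z = 0} = set_mset A"
  proof -
    have "poly P z = lead_coeff P * (\<Prod>x\<in>#A. z - x)" for z
      by (subst A(2)) (simp add: poly_prod_mset)
    then have "poly P z = 0 \<longleftrightarrow> z \<in># A" for z
      using lc by (auto simp: prod_mset_zero_iff)
    then show ?thesis by auto
  qed
  have "\<forall>x. count A x \<le> 1"
  proof (rule ccontr)
    assume "\<not> (\<forall>x. count A x \<le> 1)"
    then obtain x where "count A x > 1" by (auto simp: not_le)
    then have cx: "count A x \<ge> 2" by simp
    then have "0 < count A x" by linarith
    then have xA: "x \<in># A" by (simp only: count_greater_zero_iff)
    from multi_member_split[OF xA] obtain B where B: "A = add_mset x B" by blast
    then have "count B x \<ge> 1" using cx by simp
    then have "0 < count B x" by linarith
    then have xB: "x \<in># B" by (simp only: count_greater_zero_iff)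
    from multi_member_split[OF xB] obtain C where C: "B = add_mset x C" by blast
    define S where "S = smult (lead_coeff P) (\<Prod>y\<in>#C. [:-y, 1:])"
    define a where "a = [:-x, 1:]"
    have PS: "P = a * (a * S)"
      unfolding S_def a_def by (subst A(2)) (simp add: B C mult_smult_right)
    have ax: "poly a x = 0" by (simp add: a_def)
    have "poly P x = 0" by (simp add: PS ax)
    moreover have "pderiv P = a * pderiv (a * S) + (a * S) * pderiv a" by (simp only: PS pderiv_mult)
    then have "poly (pderiv P) x = 0" by (simp add: ax)
    ultimately show False using sq by blast
  qed
  then have "card (set_mset A) = size A" by (rule card_set_mset_le1)
  then show ?thesis using roots A(1) by simp
qed

context
  fixes q p k :: nat
  assumes cardF: "card (UNIV :: 'F::{finite,field} set) = q ^ 2"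
    and p_prime: "prime p" and k_pos: "k > 0" and q_eq: "q = p ^ k"
begin

lemma card_unity_K:
  assumes d0: "d > 0" and nd: "\<not> p dvd d"
  shows "card {z::'F alg_closure. z ^ d = 1} = d"
proof -
  define P :: "'F alg_closure poly" where "P = monom 1 d - 1"
  have cP: "coeff P d = 1" using d0 by (simp add: P_def)
  then have P0: "P \<noteq> 0" by auto
  have "degree P \<le> d" unfolding P_def
    by (rule order.trans[OF degree_diff_le_max]) (auto simp: degree_monom_le)
  moreover have "d \<le> degree P" using cP by (intro le_degree) simp
  ultimately have dP: "degree P = d" by simp
  have dnz: "(of_nat d :: 'F alg_closure) \<noteq> 0"
    using nd by (simp add: of_nat_eq_0_iff_char_dvd charF[OF cardF p_prime k_pos q_eq])
  have sq: "\<forall>a. \<not> (poly P a = 0 \<and> poly (pderiv P) a = 0)"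
  proof (intro allI notI)
    fix a :: "'F alg_closure"
    assume "poly P a = 0 \<and> poly (pderiv P) a = 0"
    then have a1: "a ^ d = 1" and a2: "of_nat d * a ^ (d - 1) = 0"
      by (auto simp: P_def poly_xn pderiv_diff pderiv_monom poly_monom)
    have "a \<noteq> 0" using a1 d0 by (metis power_0_left zero_neq_one gr_implies_not0)
    then show False using a2 dnz by simp
  qed
  have "card {z. poly P z = 0} = d" using rsquarefree_card_roots[OF P0 sq] dP by simp
  then show ?thesis by (simp add: P_def poly_xn poly_monom)
qed

lemma card_Bset_K:
  assumes "d > 0" "\<not> p dvd d"
  shows "card (Bset d :: 'F alg_closure set) = totient d"
  using assms
proof (induct d rule: less_induct)
  case (less d)
  define S where "S = {e. e dvd d}"
  have finS: "finite S" using less.prems by (simp add: S_def)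
  have dS: "d \<in> S" by (simp add: S_def)
  have IH: "card (Bset e :: 'F alg_closure set) = totient e" if "e \<in> S - {d}" for e
  proof -
    have ed: "e dvd d" "e \<noteq> d" using that by (auto simp: S_def)
    have e0: "e > 0" using ed less.prems dvd_pos_nat by blast
    have "e \<le> d" using ed less.prems by (simp add: dvd_imp_le)
    then have "e < d" using ed by simp
    moreover have "\<not> p dvd e" using ed less.prems dvd_trans by blast
    ultimately show ?thesis using less.hyps e0 by blast
  qed
  have "d = (\<Sum>e\<in>S. card (Bset e :: 'F alg_closure set))"
    using card_unity_sum[OF less.prems(1), where 'a="'F alg_closure"] card_unity_K[OF less.prems]
    by (simp add: S_def)
  also have "\<dots> = card (Bset d :: 'F alg_closure set) + (\<Sum>e\<in>S - {d}. card (Bset e :: 'F alg_closure set))"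
    by (rule sum.remove[OF finS dS])
  also have "(\<Sum>e\<in>S - {d}. card (Bset e :: 'F alg_closure set)) = (\<Sum>e\<in>S - {d}. totient e)"
    by (rule sum.cong) (auto simp: IH)
  finally have 1: "d = card (Bset d :: 'F alg_closure set) + (\<Sum>e\<in>S - {d}. totient e)" .
  have "d = (\<Sum>e\<in>S. totient e)" using totient_divisor_sum[of d] by (simp add: S_def)
  also have "\<dots> = totient d + (\<Sum>e\<in>S - {d}. totient e)" by (rule sum.remove[OF finS dS])
  finally show ?case using 1 by simp
qed

end

lemma irred_factor_root:
  fixes h :: "'a::field poly" and z :: "'a alg_closure"
  assumes "h \<noteq> 0" "poly (map_poly to_ac h) z = 0"
  shows "\<exists>f. irreducible f \<and> lead_coeff f = 1 \<and> f dvd h \<and> poly (map_poly to_ac f) z = 0"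
  using assms
proof (induct "degree h" arbitrary: h rule: less_induct)
  case (less h)
  have nu: "\<not> is_unit h"
  proof
    assume "is_unit h"
    then obtain c where "h = [:c:]" "c dvd 1" using is_unit_poly_iff by blast
    then show False using less.prems by simp
  qed
  show ?case
  proof (cases "irreducible h")
    case True
    define f where "f = [:inverse (lead_coeff h):] * h"
    have lc: "lead_coeff h \<noteq> 0" using less.prems by simp
    have u: "is_unit [:inverse (lead_coeff h):]" using lc by (simp add: is_unit_const_poly_iff dvd_field_iff)
    have "irreducible f" unfolding f_def using True irreducible_mult_unit_left[OF u] by blast
    moreover have "lead_coeff f = 1" unfolding f_def using lc by (simp add: lead_coeff_mult)
    moreover have "f dvd h"
    proof -
      have "h = [:lead_coeff h:] * f" unfolding f_def using lc
        by (simp add: mult.assoc[symmetric] flip: pCons_one)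
      then show ?thesis by (metis dvd_triv_right)
    qed
    moreover have "poly (map_poly to_ac f) z = 0" unfolding f_def to_ac_poly_mult poly_mult
      using less.prems by simp
    ultimately show ?thesis by blast
  next
    case False
    then obtain a b where ab: "h = a * b" "\<not> is_unit a" "\<not> is_unit b"
      using less.prems(1) nu by (auto simp: Factorial_Ring.irreducible_def)
    have a0: "a \<noteq> 0" and b0: "b \<noteq> 0" using ab less.prems(1) by auto
    have da: "degree a > 0" using ab(2) a0 by (metis is_unit_iff_degree gr0I)
    have db: "degree b > 0" using ab(3) b0 by (metis is_unit_iff_degree gr0I)
    have dh: "degree h = degree a + degree b" using ab a0 b0 by (simp add: degree_mult_eq)
    have "poly (map_poly to_ac a) z * poly (map_poly to_ac b) z = 0"
      using less.prems(2) ab(1) by (simp add: to_ac_poly_mult)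
    then consider "poly (map_poly to_ac a) z = 0" | "poly (map_poly to_ac b) z = 0" by auto
    then show ?thesis
    proof cases
      case 1
      have "degree a < degree h" using dh db by simp
      then obtain f where f: "irreducible f" "lead_coeff f = 1" "f dvd a" "poly (map_poly to_ac f) z = 0"
        using less.hyps[OF _ a0 1] by blast
      then have "f dvd h" using ab(1) by simp
      then show ?thesis using f by blast
    next
      case 2
      have "degree b < degree h" using dh da by simp
      then obtain f where f: "irreducible f" "lead_coeff f = 1" "f dvd b" "poly (map_poly to_ac f) z = 0"
        using less.hyps[OF _ b0 2] by blast
      then have "f dvd h" using ab(1) by simp
      then show ?thesis using f by blast
    qed
  qed
qed

context
  fixes q p k :: nat
  assumes cardF: "card (UNIV :: 'F::{finite,field} set) = q ^ 2"
    and p_prime: "prime p" and k_pos: "k > 0" and q_eq: "q = p ^ k"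
begin

lemma count_irred:
  assumes n0: "n > 0" and cp: "coprime n q"
  shows "real (card {f::'F poly. lead_coeff f = 1 \<and> irreducible f \<and> f dvd monom 1 n - 1})
         = (\<Sum>e\<in>{e. e dvd n}. real (totient e) / real (ord e (q^2)))"
proof -
  note irreducible_deg_pos = irreducible_deg_pos[OF cardF p_prime k_pos q_eq]
  note toac_root_exists = toac_root_exists[OF cardF p_prime k_pos q_eq]
  note root_dvd = root_dvd[OF cardF p_prime k_pos q_eq]
  define M where "M = {f::'F poly. lead_coeff f = 1 \<and> irreducible f \<and> f dvd monom 1 n - 1}"
  define R where "R = (\<lambda>f::'F poly. {z::'F alg_closure. poly (map_poly to_ac f) z = 0})"
  define Me where "Me = (\<lambda>e. {f\<in>M. R f \<inter> Bset e \<noteq> {}})"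
  define Q where "Q = q ^ 2"
  have Qpos: "Q > 0" using qpos[OF cardF p_prime k_pos q_eq] by (simp add: Q_def)
  have pq: "p dvd q" using k_pos q_eq by (simp add: dvd_power)
  have pn: "\<not> p dvd n"
  proof
    assume "p dvd n"
    then have "p dvd gcd n q" using pq by simp
    then show False using cp p_prime by simp
  qed
  have cpQ: "coprime n Q" using cp by (simp add: Q_def)
  have Mirr: "irreducible f" "lead_coeff f = 1" "f dvd monom 1 n - 1" if "f \<in> M" for f
    using that by (auto simp: M_def)
  have R_ne: "R f \<noteq> {}" if fM: "f \<in> M" for f
  proof -
    obtain z where "poly (map_poly to_ac f) z = 0"
      using toac_root_exists[OF irreducible_deg_pos[OF Mirr(1)[OF fM]]] by blast
    then show ?thesis by (auto simp: R_def)
  qed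
  have R_n: "z ^ n = 1" if "f \<in> M" "z \<in> R f" for f z
  proof -
    have "poly (map_poly to_ac (monom 1 n - 1)) z = 0"
      using root_dvd[OF Mirr(3)[OF that(1)]] that(2) by (simp add: R_def)
    then show ?thesis by (simp add: to_ac_xn poly_xn poly_monom)
  qed
  have R_same: "w ^ m = 1" if "f \<in> M" "z \<in> R f" "w \<in> R f" "z ^ m = 1" for f z w m
  proof -
    have "poly (map_poly to_ac (monom 1 m - 1)) z = 0" using that(4) by (simp add: to_ac_xn poly_xn poly_monom)
    then have "f dvd monom 1 m - 1" using shared_root[OF Mirr(1)[OF that(1)]] that(2) by (simp add: R_def)
    then have "poly (map_poly to_ac (monom 1 m - 1)) w = 0" using root_dvd that(3) by (simp add: R_def)
    then show ?thesis by (simp add: to_ac_xn poly_xn poly_monom)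
  qed
  have R_B: "w \<in> Bset e" if "f \<in> M" "z \<in> R f" "w \<in> R f" "z \<in> Bset e" for f z w e
    using that R_same[OF that(1) that(2) that(3)] R_same[OF that(1) that(3) that(2)]
    by (auto simp: Bset_def)
  have R_disj: "R f \<inter> R g = {}" if "f \<in> M" "g \<in> M" "f \<noteq> g" for f g
  proof (rule ccontr)
    assume "R f \<inter> R g \<noteq> {}"
    then obtain z where z: "z \<in> R f" "z \<in> R g" by blast
    have fg: "f dvd g" using shared_root[OF Mirr(1)[OF that(1)]] z by (simp add: R_def)
    have gf: "g dvd f" using shared_root[OF Mirr(1)[OF that(2)]] z by (simp add: R_def)
    have f0: "f \<noteq> 0" "g \<noteq> 0" using Mirr(1)[OF that(1)] Mirr(1)[OF that(2)] by auto
    have "degree g \<le> degree f" using dvd_imp_degree_le[OF gf f0(1)] .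
    then have "f = g" using monic_dvd_eq[OF fg f0(2) _ Mirr(2)[OF that(1)] Mirr(2)[OF that(2)]] by simp
    then show False using that(3) by simp
  qed
  have R_fin: "finite (R f)" if "f \<in> M" for f
  proof -
    have "map_poly to_ac f \<noteq> 0" using Mirr(1)[OF that] by (metis map_poly_0 not_irreducible_zero to_ac_poly_eq_iff)
    then show ?thesis unfolding R_def by (rule poly_roots_finite)
  qed
  have finM: "finite M"
  proof -
    have inj: "inj_on R M"
    proof (rule inj_onI)
      fix f g assume fg: "f \<in> M" "g \<in> M" "R f = R g"
      show "f = g"
      proof (rule ccontr)
        assume "f \<noteq> g"
        then have "R f \<inter> R g = {}" using R_disj fg by blast
        then show False using fg R_ne by auto
      qed
    qed
    have "R ` M \<subseteq> Pow {z. z ^ n = 1}" using R_n by blast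
    moreover have "finite (Pow {z::'F alg_closure. z ^ n = 1})" using finite_unity[OF n0] by simp
    ultimately have "finite (R ` M)" by (rule finite_subset)
    then show ?thesis using inj by (rule finite_imageD)
  qed
  have epos: "e > 0" if "e dvd n" for e using that n0 dvd_pos_nat by blast
  have cpe: "coprime e Q" if "e dvd n" for e using that cpQ coprime_imp_coprime dvd_trans by blast
  have card_R: "card (R f) = ord e Q" if ed: "e dvd n" and fM: "f \<in> Me e" for e f
  proof -
    have f: "f \<in> M" using fM by (simp add: Me_def)
    obtain \<alpha> where a: "\<alpha> \<in> R f" "\<alpha> \<in> Bset e" using fM by (auto simp: Me_def)
    have an: "\<alpha> ^ n = 1" by (rule R_n[OF f a(1)])
    then have a0: "\<alpha> \<noteq> 0" using n0 by (metis power_0_left zero_neq_one gr_implies_not0)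
    obtain m where per: "m > 0" "\<alpha> ^ (Q ^ m) = \<alpha>" using per_exists[OF an n0 cpQ Qpos] by blast
    define m0 where "m0 = (LEAST m. m > 0 \<and> \<alpha> ^ ((q^2)^m) = \<alpha>)"
    have rt: "poly (map_poly to_ac f) \<alpha> = 0" using a(1) by (simp add: R_def)
    note cr = core[OF cardF p_prime k_pos q_eq Mirr(1)[OF f] Mirr(2)[OF f] rt, of m, folded m0_def]
    have cr1: "map_poly to_ac f = (\<Prod>i<m0. [:- (\<alpha> ^ ((q^2)^i)), 1:])" using cr per by (simp add: Q_def)
    have cr2: "inj_on (\<lambda>i. \<alpha> ^ ((q^2)^i)) {..<m0}" using cr per by (simp add: Q_def)
    have "R f = (\<lambda>i. \<alpha> ^ ((q^2)^i)) ` {..<m0}"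
      unfolding R_def cr1 by (auto simp: poly_prod prod_zero_iff)
    then have cRf: "card (R f) = m0" using card_image[OF cr2] by simp
    have equiv: "(m > 0 \<and> \<alpha> ^ ((q^2)^m) = \<alpha>) \<longleftrightarrow> (m > 0 \<and> [Q ^ m = 1] (mod e))" for m
    proof -
      have N1: "Q ^ m \<ge> 1" using Qpos by simp
      have "\<alpha> ^ (Q ^ m) = \<alpha> ^ (Q ^ m - 1) * \<alpha>" using N1
        by (metis le_add_diff_inverse2 power_add power_one_right)
      then have "\<alpha> ^ (Q ^ m) = \<alpha> \<longleftrightarrow> \<alpha> ^ (Q ^ m - 1) = 1" using a0 by auto
      also have "\<dots> \<longleftrightarrow> e dvd Q ^ m - 1" by (rule Bset_iff[OF a(2) epos[OF ed]])
      also have "\<dots> \<longleftrightarrow> [Q ^ m = 1] (mod e)" using N1 by (simp add: cong_altdef_nat)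
      finally show ?thesis by (simp add: Q_def)
    qed
    have "ord e Q = (LEAST d. d > 0 \<and> [Q ^ d = 1] (mod e))"
      using cpe[OF ed] by (simp add: ord_def)
    also have "\<dots> = m0" unfolding m0_def using equiv by simp
    finally show ?thesis using cRf by simp
  qed
  have B_union: "Bset e = \<Union>(R ` Me e)" if ed: "e dvd n" for e
  proof
    show "\<Union>(R ` Me e) \<subseteq> Bset e"
    proof
      fix w assume "w \<in> \<Union>(R ` Me e)"
      then obtain f where f: "f \<in> Me e" "w \<in> R f" by blast
      then obtain z where z: "z \<in> R f" "z \<in> Bset e" by (auto simp: Me_def)
      show "w \<in> Bset e" using R_B[OF _ z(1) f(2) z(2)] f(1) by (simp add: Me_def)
    qed
  next
    show "Bset e \<subseteq> \<Union>(R ` Me e)"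
    proof
      fix z :: "'F alg_closure" assume z: "z \<in> Bset e"
      have "z ^ n = 1" using Bset_iff[OF z epos[OF ed]] ed by simp
      then have "poly (map_poly to_ac (monom 1 n - 1 :: 'F poly)) z = 0"
        by (simp add: to_ac_xn poly_xn poly_monom)
      moreover have "(monom 1 n - 1 :: 'F poly) \<noteq> 0"
      proof -
        have "coeff (monom 1 n - 1 :: 'F poly) n = 1" using n0 by simp
        then show ?thesis by (metis coeff_0 zero_neq_one)
      qed
      ultimately obtain f where f: "irreducible f" "lead_coeff f = 1" "f dvd monom 1 n - 1"
          "poly (map_poly to_ac f) z = 0"
        using irred_factor_root by blast
      then have "f \<in> M" "z \<in> R f" by (auto simp: M_def R_def)
      then have "f \<in> Me e" using z by (auto simp: Me_def)
      then show "z \<in> \<Union>(R ` Me e)" using \<open>z \<in> R f\<close> by blast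
    qed
  qed
  have card_B: "card (Bset e :: 'F alg_closure set) = card (Me e) * ord e Q" if ed: "e dvd n" for e
  proof -
    have finMe: "finite (Me e)" using finM by (rule finite_subset[rotated]) (auto simp: Me_def)
    have "card (Bset e :: 'F alg_closure set) = card (\<Union>(R ` Me e))" using B_union[OF ed] by simp
    also have "\<dots> = (\<Sum>f\<in>Me e. card (R f))"
    proof (rule card_UN_disjoint)
      show "finite (Me e)" by (rule finMe)
      show "\<forall>f\<in>Me e. finite (R f)" using R_fin by (auto simp: Me_def)
      show "\<forall>f\<in>Me e. \<forall>g\<in>Me e. f \<noteq> g \<longrightarrow> R f \<inter> R g = {}" using R_disj by (auto simp: Me_def)
    qed
    also have "\<dots> = (\<Sum>f\<in>Me e. ord e Q)" by (rule sum.cong) (auto simp: card_R[OF ed])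
    finally show ?thesis by simp
  qed
  have Bcard: "card (Bset e :: 'F alg_closure set) = totient e" if ed: "e dvd n" for e
  proof -
    have "\<not> p dvd e" using ed pn dvd_trans by blast
    then show ?thesis using card_Bset_K[OF cardF p_prime k_pos q_eq epos[OF ed]] by simp
  qed
  have M_union: "M = \<Union>(Me ` {e. e dvd n})"
  proof
    show "M \<subseteq> \<Union>(Me ` {e. e dvd n})"
    proof
      fix f assume f: "f \<in> M"
      then obtain z where z: "z \<in> R f" using R_ne by blast
      have "z ^ n = 1" by (rule R_n[OF f z])
      then obtain e where e: "e dvd n" "e > 0" "z \<in> Bset e" using Bset_exists n0 by blast
      then have "f \<in> Me e" using f z by (auto simp: Me_def)
      then show "f \<in> \<Union>(Me ` {e. e dvd n})" using e by blast
    qed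
  next
    show "\<Union>(Me ` {e. e dvd n}) \<subseteq> M" by (auto simp: Me_def)
  qed
  have Me_disj: "Me e \<inter> Me e' = {}" if "e dvd n" "e' dvd n" "e \<noteq> e'" for e e'
  proof (rule ccontr)
    assume "Me e \<inter> Me e' \<noteq> {}"
    then obtain f where f: "f \<in> Me e" "f \<in> Me e'" by blast
    obtain z where z: "z \<in> R f" "z \<in> Bset e" using f(1) by (auto simp: Me_def)
    obtain w where w: "w \<in> R f" "w \<in> Bset e'" using f(2) by (auto simp: Me_def)
    have fM: "f \<in> M" using f by (simp add: Me_def)
    have "z \<in> Bset e'" by (rule R_B[OF fM w(1) z(1) w(2)])
    then show False using z(2) Bset_disj[OF epos[OF that(1)] epos[OF that(2)] that(3)] by blast
  qed
  have "card M = (\<Sum>e\<in>{e. e dvd n}. card (Me e))"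
    unfolding M_union
  proof (rule card_UN_disjoint)
    show "finite {e. e dvd n}" using n0 by simp
    show "\<forall>e\<in>{e. e dvd n}. finite (Me e)"
      using finM by (auto intro: finite_subset[rotated] simp: Me_def)
    show "\<forall>e\<in>{e. e dvd n}. \<forall>e'\<in>{e. e dvd n}. e \<noteq> e' \<longrightarrow> Me e \<inter> Me e' = {}"
      using Me_disj by blast
  qed
  then have "real (card M) = (\<Sum>e\<in>{e. e dvd n}. real (card (Me e)))" by simp
  also have "\<dots> = (\<Sum>e\<in>{e. e dvd n}. real (totient e) / real (ord e Q))"
  proof (rule sum.cong[OF refl])
    fix e assume "e \<in> {e. e dvd n}"
    then have ed: "e dvd n" by simp
    have "ord e Q > 0" using cpe[OF ed] by (simp add: ord_eq_0[symmetric] gr0I)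
    moreover have "totient e = card (Me e) * ord e Q" using card_B[OF ed] Bcard[OF ed] by simp
    ultimately show "real (card (Me e)) = real (totient e) / real (ord e Q)" by simp
  qed
  finally show ?thesis by (simp add: M_def Q_def)
qed

end

lemma nt_a_eq_1:
  fixes l q j a d :: nat
  assumes lp: "prime l" and lo: "odd l" and cp: "coprime l q"
    and od: "ord l q = 2 ^ a * d" "odd d"
    and dv: "l dvd q ^ j + 1" and oj: "odd j"
  shows "a = 1"
proof -
  have l3: "l > 2" using lp lo prime_ge_2_nat[OF lp] by (metis le_neq_implies_less even_numeral)
  have y1: "q ^ j \<ge> 1"
  proof -
    have "q \<noteq> 0"
    proof
      assume "q = 0"
      then have "l = 1" using cp by simp
      then show False using lp by simp
    qed
    then show ?thesis by simp
  qed
  have "(q ^ j) ^ 2 - 1 = (q ^ j - 1) * (q ^ j + 1)" using y1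
    by (simp add: power2_eq_square algebra_simps diff_mult_distrib)
  then have "l dvd (q ^ j) ^ 2 - 1" using dv by (metis dvd_mult)
  then have "[(q ^ j) ^ 2 = 1] (mod l)" using y1 by (simp add: cong_altdef_nat)
  then have c2: "[q ^ (2 * j) = 1] (mod l)" by (simp add: power_mult mult.commute)
  have nk: "\<not> [q ^ j = 1] (mod l)"
  proof
    assume "[q ^ j = 1] (mod l)"
    then have "l dvd q ^ j - 1" using y1 by (simp add: cong_altdef_nat)
    then have "l dvd (q ^ j + 1) - (q ^ j - 1)" using dv by (simp add: dvd_diff_nat)
    moreover have "(q ^ j + 1) - (q ^ j - 1) = 2" using y1 by simp
    ultimately have "l dvd 2" by simp
    then have "l \<le> 2" by (rule dvd_imp_le) simp
    then show False using l3 by simp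
  qed
  have o2: "ord l q dvd 2 * j" using c2 Pocklington.ord_divides by blast
  have o1: "\<not> ord l q dvd j" using nk Pocklington.ord_divides by blast
  show "a = 1"
  proof (rule ccontr)
    assume a1: "a \<noteq> 1"
    show False
    proof (cases "a = 0")
      case True
      then have "d dvd 2 * j" using o2 od by simp
      moreover have "coprime d 2" using od(2) by simp
      ultimately have "d dvd j" using coprime_dvd_mult_right_iff by blast
      then show False using o1 od True by simp
    next
      case False
      then have "a \<ge> 2" using a1 by simp
      then have "(2::nat) ^ 2 dvd 2 ^ a" by (rule le_imp_power_dvd)
      then have "(4::nat) dvd 2 ^ a" by simp
      then have "4 dvd 2 * j" using o2 od by (metis dvd_mult_left dvd_trans)
      then have "2 dvd j" by auto
      then show False using oj by simp
    qed
  qed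
qed

lemma nt_half:
  fixes l q d :: nat
  assumes lp: "prime l" and cp: "coprime l q" and od: "ord l q = 2 * d"
  shows "l dvd q ^ d + 1"
proof -
  have o0: "ord l q > 0" using cp by (simp add: ord_eq_0[symmetric] gr0I)
  then have d0: "d > 0" using od by simp
  have q0: "q \<noteq> 0"
  proof
    assume "q = 0"
    then have "l = 1" using cp by simp
    then show False using lp by simp
  qed
  have y1: "q ^ d \<ge> 1" using q0 by simp
  have "[q ^ (ord l q) = 1] (mod l)" by (rule ord)
  then have "[(q ^ d) ^ 2 = 1] (mod l)" using od by (simp add: power_mult mult.commute)
  then have "l dvd (q ^ d) ^ 2 - 1" using y1 by (simp add: cong_altdef_nat)
  moreover have "(q ^ d) ^ 2 - 1 = (q ^ d - 1) * (q ^ d + 1)" using y1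
    by (simp add: power2_eq_square algebra_simps diff_mult_distrib)
  ultimately have "l dvd (q ^ d - 1) * (q ^ d + 1)" by simp
  then have "l dvd q ^ d - 1 \<or> l dvd q ^ d + 1" using lp prime_dvd_mult_iff by blast
  moreover have "\<not> l dvd q ^ d - 1"
  proof
    assume "l dvd q ^ d - 1"
    then have "[q ^ d = 1] (mod l)" using y1 by (simp add: cong_altdef_nat)
    moreover have "d < ord l q" using od d0 by simp
    ultimately show False using ord_minimal[OF d0] by blast
  qed
  ultimately show ?thesis by blast
qed

lemma nt_oddpow_int:
  fixes x :: int
  assumes "m dvd x + 1" "odd n"
  shows "m dvd x ^ n + 1"
proof -
  have "x ^ n - (-1) ^ n = (x - (-1)) * (\<Sum>i<n. (-1) ^ (n - Suc i) * x ^ i)"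
    by (rule power_diff_sumr2)
  then have "x ^ n + 1 = (x + 1) * (\<Sum>i<n. (-1) ^ (n - Suc i) * x ^ i)" using assms(2) by simp
  then show ?thesis using assms(1) by simp
qed

lemma nt_lift_int:
  fixes x :: int and l s :: nat
  assumes lo: "odd l" and dv: "int l ^ s dvd x + 1" and s1: "s \<ge> 1"
  shows "int l ^ Suc s dvd x ^ l + 1"
proof -
  have e: "x ^ l - (-1) ^ l = (x - (-1)) * (\<Sum>i<l. (-1) ^ (l - Suc i) * x ^ i)"
    by (rule power_diff_sumr2)
  define S where "S = (\<Sum>i<l. (-1) ^ (l - Suc i) * x ^ i)"
  have xl: "x ^ l + 1 = (x + 1) * S" using e lo by (simp add: S_def)
  have "int l dvd int l ^ s" using s1 by (simp add: dvd_power)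
  then have "int l dvd x + 1" using dv dvd_trans by blast
  then have cx: "[x = -1] (mod int l)" by (simp add: cong_iff_dvd_diff)
  have "[S = (\<Sum>i<l. (-1) ^ (l - Suc i) * (-1) ^ i)] (mod int l)"
    unfolding S_def by (intro cong_sum cong_mult cong_refl cong_pow cx)
  also have "(\<Sum>i<l. (-1::int) ^ (l - Suc i) * (-1) ^ i) = (\<Sum>i<l. (-1::int) ^ (l - 1))"
  proof (rule sum.cong[OF refl])
    fix i assume "i \<in> {..<l}"
    then have "l - Suc i + i = l - 1" by simp
    then show "(-1::int) ^ (l - Suc i) * (-1) ^ i = (-1) ^ (l - 1)" by (metis power_add)
  qed
  also have "\<dots> = int l" using lo by simp
  finally have "[S = int l] (mod int l)" .
  then have "int l dvd S" by (simp add: cong_dvd_iff)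
  then have "int l ^ s * int l dvd (x + 1) * S" using dv by (rule mult_dvd_mono[rotated]) 
  then show ?thesis using xl by (simp add: mult.commute)
qed

lemma nt_lift_pow_int:
  fixes x :: int and l s :: nat
  assumes lo: "odd l" and dv: "int l dvd x + 1"
  shows "int l ^ Suc s dvd x ^ (l ^ s) + 1"
proof (induct s)
  case 0 then show ?case using dv by simp
next
  case (Suc s)
  have "int l ^ Suc (Suc s) dvd (x ^ (l ^ s)) ^ l + 1"
    by (rule nt_lift_int[OF lo Suc]) simp
  then show ?case by (simp add: power_mult[symmetric] mult.commute)
qed

lemma prod_dvd_pairwise_coprime:
  fixes f :: "'b \<Rightarrow> nat"
  assumes "finite I" "\<forall>i\<in>I. f i dvd N" "\<forall>i\<in>I. \<forall>j\<in>I. i \<noteq> j \<longrightarrow> coprime (f i) (f j)"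
  shows "prod f I dvd N"
  using assms
proof (induct I rule: finite_induct)
  case (insert x F)
  have "coprime (f x) (prod f F)"
    by (rule prod_coprime_right) (use insert in auto)
  moreover have "f x dvd N" "prod f F dvd N" using insert by auto
  ultimately show ?case using insert by (simp add: divides_mult)
qed simp

lemma odd_prod_nat:
  fixes f :: "'b \<Rightarrow> nat"
  assumes "finite I" "\<forall>i\<in>I. odd (f i)"
  shows "odd (prod f I)"
  using assms by (induct I rule: finite_induct) auto

lemma nt_all_one:
  fixes l r d :: "nat \<Rightarrow> nat" and q :: nat and I :: "nat set"
  assumes fin: "finite I" and lp: "\<forall>i\<in>I. prime (l i) \<and> odd (l i) \<and> coprime (l i) q"
    and inj: "inj_on l I" and rp: "\<forall>i\<in>I. r i > 0"
    and od: "\<forall>i\<in>I. ord (l i) q = 2 * d i \<and> odd (d i)"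
  shows "\<exists>j. odd j \<and> (\<Prod>i\<in>I. l i ^ r i) dvd q ^ j + 1"
proof -
  define J where "J = (\<Prod>i\<in>I. d i * l i ^ (r i - 1))"
  have oJ: "odd J" unfolding J_def using fin lp od by (intro odd_prod_nat) auto
  have each: "l i ^ r i dvd q ^ J + 1" if iI: "i \<in> I" for i
  proof -
    define A where "A = (\<Prod>i'\<in>I - {i}. d i' * l i' ^ (r i' - 1))"
    have oA: "odd A" unfolding A_def using fin lp od by (intro odd_prod_nat) auto
    have JA: "J = d i * l i ^ (r i - 1) * A" unfolding J_def A_def using fin iI by (rule prod.remove)
    have l: "prime (l i)" "odd (l i)" "coprime (l i) q" using lp iI by auto
    have "l i dvd q ^ d i + 1" using nt_half[OF l(1) l(3)] od iI by simp
    then have "int (l i) dvd int (q ^ d i) + 1" by (metis of_nat_1 of_nat_add int_dvd_int_iff)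
    then have "int (l i) dvd int (q ^ d i) ^ A + 1" using oA by (rule nt_oddpow_int)
    then have "int (l i) ^ Suc (r i - 1) dvd (int (q ^ d i) ^ A) ^ (l i ^ (r i - 1)) + 1"
      by (rule nt_lift_pow_int[OF l(2)])
    moreover have "Suc (r i - 1) = r i" using rp iI by simp
    moreover have "(int (q ^ d i) ^ A) ^ (l i ^ (r i - 1)) = int (q ^ J)"
      by (simp add: JA power_mult[symmetric] mult_ac)
    ultimately have "int (l i ^ r i) dvd int (q ^ J + 1)" by (simp add: add.commute)
    then show ?thesis by (simp only: int_dvd_int_iff)
  qed
  have cop: "coprime (l i ^ r i) (l j ^ r j)" if "i \<in> I" "j \<in> I" "i \<noteq> j" for i j
  proof -
    have "l i \<noteq> l j" using inj that by (auto simp: inj_on_def)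
    then have "coprime (l i) (l j)" using lp that primes_coprime by blast
    then show ?thesis by simp
  qed
  have "(\<Prod>i\<in>I. l i ^ r i) dvd q ^ J + 1"
    by (rule prod_dvd_pairwise_coprime) (use fin each cop in auto)
  then show ?thesis using oJ by blast
qed

lemma xpow_dvd:
  assumes "a dvd b"
  shows "(monom 1 a - 1 :: 'a::comm_ring_1 poly) dvd monom 1 b - 1"
proof -
  obtain c where b: "b = a * c" using assms by blast
  have "(monom 1 b :: 'a poly) = (monom 1 a) ^ c" by (simp add: b monom_power)
  then have "(monom 1 b - 1 :: 'a poly) = (monom 1 a - 1) * (\<Sum>i<c. (monom 1 a) ^ i)"
    by (simp add: power_diff_1_eq)
  then show ?thesis by simp
qed

lemma x_minus_1: "(monom 1 1 - 1 :: 'a::comm_ring_1 poly) = [:-1, 1:]"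
  by (rule poly_eqI) (simp add: coeff_monom coeff_pCons split: nat.split)

context
  fixes q p k :: nat
  assumes cardF: "card (UNIV :: 'F::{finite,field} set) = q ^ 2"
    and p_prime: "prime p" and k_pos: "k > 0" and q_eq: "q = p ^ k"
begin

lemma minus_one_pow_q: "(-1::'F) ^ q = -1"
proof -
  have "(1 + (-1::'F)) ^ q = 1 ^ q + (-1) ^ q" by (rule frobF_q[OF cardF p_prime k_pos q_eq])
  moreover have "(0::'F) ^ q = 0" using qpos[OF cardF p_prime k_pos q_eq] by simp
  ultimately have "1 + (-1::'F) ^ q = 0" by simp
  then show ?thesis by (simp add: eq_neg_iff_add_eq_0 add.commute)
qed

lemma x1_scrim: "SCRIM q ([:-1, 1:] :: 'F poly)"
proof -
  have r: "recip_poly ([:-1, 1:] :: 'F poly) = [:-1, 1:]"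
    by (simp add: recip_poly_def reflect_poly_def)
  have "conj_poly q ([:-1, 1:] :: 'F poly) = [:-1, 1:]"
    by (rule poly_eqI)
       (simp add: conj_coeff[OF cardF p_prime k_pos q_eq] coeff_pCons minus_one_pow_q
          qpos[OF cardF p_prime k_pos q_eq] split: nat.split)
  then have "dagger_poly q ([:-1, 1:] :: 'F poly) = [:-1, 1:]" by (simp add: dagger_poly_def r)
  moreover have "irreducible ([:-1, 1:] :: 'F poly)" by (rule irreducible_linear_field_poly) simp
  ultimately show ?thesis by (simp add: SCRIM_def)
qed

end

theorem theorem2p14:
  fixes q t :: nat and l r a d :: "nat \<Rightarrow> nat"
  assumes field_card: "card (UNIV :: 'F::{finite,field} set) = q ^ 2"
    and q_pp: "\<exists>p k. prime p \<and> k > 0 \<and> q = p ^ k"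
    and l_inj: "inj_on l {1..t}"
    and l_prime: "\<forall>i\<in>{1..t}. prime (l i) \<and> odd (l i) \<and> coprime (l i) q"
    and r_pos: "\<forall>i\<in>{1..t}. r i > 0"
    and ord_dec: "\<forall>i\<in>{1..t}. ord (l i) q = 2 ^ a i * d i \<and> odd (d i)"
  shows
    "(\<forall>j\<in>{1..t}. (a j = 0 \<or> a j \<ge> 2) \<longrightarrow>
        card (Omega q (\<Prod>i\<in>{1..t}. l i ^ r i) :: 'F poly set)
        = card (Omega q (\<Prod>i\<in>{1..t} - {j}. l i ^ r i) :: 'F poly set))
   \<and> ((\<forall>i\<in>{1..t}. a i = 1) \<longrightarrow>
        real (card (Omega q (\<Prod>i\<in>{1..t}. l i ^ r i) :: 'F poly set))
        = (\<Sum>e\<in>{e. e dvd (\<Prod>i\<in>{1..t}. l i ^ r i)}. real (totient e) / real (ord e (q ^ 2))))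
   \<and> ((\<forall>i\<in>{1..t}. a i \<noteq> 1) \<longrightarrow>
        card (Omega q (\<Prod>i\<in>{1..t}. l i ^ r i) :: 'F poly set) = 1)"
proof -
  obtain p k where pk: "prime p" "k > 0" "q = p ^ k" using q_pp by blast
  note ctx = field_card pk
  note irreducible_deg_pos = irreducible_deg_pos[OF ctx]
  note omega_gcd = omega_gcd[OF ctx]
  note all_scrim = all_scrim[OF ctx]
  note count_irred = count_irred[OF ctx]
  note x1_scrim = x1_scrim[OF ctx]
  define n where "n = (\<Prod>i\<in>{1..t}. l i ^ r i)"
  have lpos: "l i > 0" if "i \<in> {1..t}" for i using l_prime that prime_gt_0_nat by blast
  have n0: "n > 0" unfolding n_def using lpos by (simp add: prod_pos)
  have cpn: "coprime n q" unfolding n_def by (rule prod_coprime_left) (use l_prime in auto)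
  have nonone: "\<not> l i dvd q ^ J + 1" if "i \<in> {1..t}" "a i \<noteq> 1" "odd J" for i J
  proof
    assume "l i dvd q ^ J + 1"
    then have "a i = 1" using nt_a_eq_1[of "l i" q "a i" "d i" J] l_prime ord_dec that by blast
    then show False using that by simp
  qed
  have part1: "\<forall>j\<in>{1..t}. (a j = 0 \<or> a j \<ge> 2) \<longrightarrow>
        card (Omega q n :: 'F poly set) = card (Omega q (\<Prod>i\<in>{1..t} - {j}. l i ^ r i) :: 'F poly set)"
  proof (intro ballI impI)
    fix j assume jI: "j \<in> {1..t}" and aj: "a j = 0 \<or> a j \<ge> 2"
    define n' where "n' = (\<Prod>i\<in>{1..t} - {j}. l i ^ r i)"
    have nn': "n = l j ^ r j * n'" unfolding n_def n'_def using jI by (simp add: prod.remove)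
    have "(Omega q n :: 'F poly set) = Omega q n'"
    proof
      show "(Omega q n :: 'F poly set) \<subseteq> Omega q n'"
      proof
        fix f :: "'F poly" assume om: "f \<in> Omega q n"
        obtain J where J: "odd J" "f dvd monom 1 (gcd n (q ^ J + 1)) - 1"
          using omega_gcd[OF om n0 cpn] by blast
        define g where "g = gcd n (q ^ J + 1)"
        have "\<not> l j dvd g"
        proof
          assume "l j dvd g"
          then have "l j dvd q ^ J + 1" unfolding g_def using dvd_trans gcd_dvd2 by blast
          then show False using nonone[OF jI _ J(1)] aj by auto
        qed
        then have "coprime (l j) g" using l_prime jI prime_imp_coprime by blast
        then have cg: "coprime g (l j ^ r j)" by (simp add: coprime_commute)
        have "g dvd l j ^ r j * n'" unfolding g_def using nn' by simp
        then have "g dvd n'" using cg coprime_dvd_mult_right_iff by blast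
        then have "f dvd monom 1 n' - 1" using J(2) xpow_dvd dvd_trans unfolding g_def by blast
        then show "f \<in> Omega q n'" using om by (simp add: Omega_def)
      qed
    next
      show "(Omega q n' :: 'F poly set) \<subseteq> Omega q n"
      proof
        fix f :: "'F poly" assume om: "f \<in> Omega q n'"
        have "n' dvd n" using nn' by simp
        then have x: "(monom 1 n' - 1 :: 'F poly) dvd monom 1 n - 1" by (rule xpow_dvd)
        have "f dvd monom 1 n' - 1" using om by (simp add: Omega_def)
        then have "f dvd monom 1 n - 1" using x by (rule dvd_trans)
        then show "f \<in> Omega q n" using om by (simp add: Omega_def)
      qed
    qed
    then show "card (Omega q n :: 'F poly set) = card (Omega q (\<Prod>i\<in>{1..t} - {j}. l i ^ r i) :: 'F poly set)"
      by (simp add: n'_def)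
  qed
  have part2: "(\<forall>i\<in>{1..t}. a i = 1) \<longrightarrow>
        real (card (Omega q n :: 'F poly set))
        = (\<Sum>e\<in>{e. e dvd n}. real (totient e) / real (ord e (q ^ 2)))"
  proof
    assume all1: "\<forall>i\<in>{1..t}. a i = 1"
    have "\<forall>i\<in>{1..t}. ord (l i) q = 2 * d i \<and> odd (d i)" using ord_dec all1 by simp
    then obtain J where J: "odd J" "n dvd q ^ J + 1"
      using nt_all_one[of "{1..t}" l q r d] l_prime l_inj r_pos unfolding n_def by auto
    have "(Omega q n :: 'F poly set) = {f. lead_coeff f = 1 \<and> irreducible f \<and> f dvd monom 1 n - 1}"
    proof
      show "(Omega q n :: 'F poly set) \<subseteq> {f. lead_coeff f = 1 \<and> irreducible f \<and> f dvd monom 1 n - 1}"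
        by (auto simp: Omega_def SCRIM_def)
      show "{f. lead_coeff f = 1 \<and> irreducible f \<and> f dvd monom 1 n - 1} \<subseteq> (Omega q n :: 'F poly set)"
        using all_scrim[OF _ _ _ n0 J(2) J(1)] by (auto simp: Omega_def)
    qed
    then show "real (card (Omega q n :: 'F poly set))
        = (\<Sum>e\<in>{e. e dvd n}. real (totient e) / real (ord e (q ^ 2)))"
      using count_irred[OF n0 cpn] by simp
  qed
  have part3: "(\<forall>i\<in>{1..t}. a i \<noteq> 1) \<longrightarrow> card (Omega q n :: 'F poly set) = 1"
  proof
    assume alln: "\<forall>i\<in>{1..t}. a i \<noteq> 1"
    have xin: "[:-1, 1:] \<in> (Omega q n :: 'F poly set)"
    proof -
      have "(monom 1 1 - 1 :: 'F poly) dvd monom 1 n - 1" by (rule xpow_dvd) simp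
      then have "([:-1, 1:] :: 'F poly) dvd monom 1 n - 1" by (simp only: x_minus_1)
      then show ?thesis using x1_scrim by (simp add: Omega_def)
    qed
    have "(Omega q n :: 'F poly set) = {[:-1, 1:]}"
    proof
      show "{[:-1, 1:]} \<subseteq> (Omega q n :: 'F poly set)" using xin by simp
      show "(Omega q n :: 'F poly set) \<subseteq> {[:-1, 1:]}"
      proof
        fix f :: "'F poly" assume om: "f \<in> Omega q n"
        obtain J where J: "odd J" "f dvd monom 1 (gcd n (q ^ J + 1)) - 1"
          using omega_gcd[OF om n0 cpn] by blast
        have g1: "gcd n (q ^ J + 1) = 1"
        proof (rule ccontr)
          assume "gcd n (q ^ J + 1) \<noteq> 1"
          then obtain P where P: "prime P" "P dvd gcd n (q ^ J + 1)" using prime_factor_nat by blast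
          then have "P dvd n" by (meson dvd_trans gcd_dvd1)
          then obtain i where i: "i \<in> {1..t}" "P dvd l i ^ r i"
            using P(1) unfolding n_def by (auto simp: prime_dvd_prod_iff)
          then have "P dvd l i" using P(1) prime_dvd_power by blast
          then have "P = l i" using P(1) l_prime i(1) primes_dvd_imp_eq by blast
          moreover have "P dvd q ^ J + 1" using P(2) by (meson dvd_trans gcd_dvd2)
          ultimately show False using nonone[OF i(1) _ J(1)] alln i(1) by auto
        qed
        have "f dvd monom 1 1 - 1" using J(2) by (simp only: g1)
        then have fd: "f dvd [:-1, 1:]" by (simp only: x_minus_1)
        have sc: "SCRIM q f" using om by (simp add: Omega_def)
        then have irr: "irreducible f" and mon: "lead_coeff f = 1" by (auto simp: SCRIM_def)
        have "degree ([:-1, 1:] :: 'F poly) \<le> degree f" using irreducible_deg_pos[OF irr] by simp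
        then have "f = [:-1, 1:]" using monic_dvd_eq[OF fd _ _ mon] by simp
        then show "f \<in> {[:-1, 1:]}" by simp
      qed
    qed
    then show "card (Omega q n :: 'F poly set) = 1" by simp
  qed
  show ?thesis using part1 part2 part3 unfolding n_def by blast
qed

end
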